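(* Let $\lambda>0$, $\ell>0$. Every curve $\gamma\in\omega$ is embedded (injective on $[0,1]$).
   Context: Elliptic functions: for $q\in[0,1)$, $x\in\mathbb{R}$, $\mathrm{F}(x,q)=\int_0^x(1-q^2\sin^2\theta)^{-1/2}\,d\theta$, $\mathrm{E}(x,q)=\int_0^x(1-q^2\sin^2\theta)^{1/2}\,d\theta$, $\mathrm{K}(q)=\mathrm{F}(\pi/2,q)$, $\mathrm{E}(q)=\mathrm{E}(\pi/2,q)$; $\mathrm{am}(\cdot,q)$ is the inverse of $x\mapsto\mathrm{F}(x,q)$, $\mathrm{cn}(x,q)=\cos\mathrm{am}(x,q)$. The function $q\mapsto2\mathrm{E}(q)-\mathrm{K}(q)$ is strictly decreasing on $[0,1)$ with unique zero $q_*\in(0,1)$. On $[1/\sqrt2,1)$ let $f(q)=(4q^4-5q^2+1)\mathrm{K}(q)+(-8q^4+8q^2-1)\mathrm{E}(q)$ and $g(q)=8(2\mathrm{E}(q)-\mathrm{K}(q))^2(2q^2-1)$. $f$ has a unique zero $\hat q\in[1/\sqrt2,1)$; $\hat\lambda:=g(\hat q)\approx0.70107$. $g(1/\sqrt2)=0$, $g$ strictly increasing on $[1/\sqrt2,\hat q]$, strictly decreasing on $[\hat q,q_*]$. For $c\in(0,\hat\lambda]$ let $q_1(c)\in(1/\sqrt2,\hat q]$, $q_2(c)\in[\hat q,q_* )$ solve $g(q)=c$. $A_\ell=\{\gamma\in W^{2,2}(0,1;\mathbb{R}^2): |\gamma'|\neq0$ on $[0,1]$, $\gamma(0)=(0,0),\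 \gamma(1)=(\ell,0)\}$. For $\lambda\ell^2\le\hat\lambda$, $\gamma_{\rm sarc}^{\lambda,\ell,1}:[0,2\mathrm{K}(q)/\alpha]\to\mathbb{R}^2$ is $\gamma(s)=\frac1\alpha\big(2\mathrm{E}(\mathrm{am}(\alpha s-\mathrm{K}(q),q),q)+2\mathrm{E}(q)-\alpha s,\ 2q\,\mathrm{cn}(\alpha s-\mathrm{K}(q),q)\big)$ with $q=q_1(\lambda\ell^2)$, $\alpha=\frac{2}{\ell}(2\mathrm{E}(q)-\mathrm{K}(q))$, and $\gamma_{\rm larc}^{\lambda,\ell,1}$ is the same formula with $q=q_2(\lambda\ell^2)$; $\bar\gamma_{\rm sarc}^{\lambda,\ell,1},\bar\gamma_{\rm larc}^{\lambda,\ell,1}:[0,1]\to\mathbb{R}^2$ are their constant-speed reparametrizations, and $\gamma_{\rm seg}:[0,1]\to\mathbb{R}^2$, $\gamma_{\rm seg}(x)=(\ell x,0)$, is the line segment. The set $\omega\subset A_\ell$ is $\{\gamma_{\rm seg},\bar\gamma_{\rm larc}^{\lambda,\ell,1},\bar\gamma_{\rm sarc}^{\lambda,\ell,1}\}$ if $\lambda\ell^2\le\hat\lambda$, and $\{\gamma_{\rm seg}\}$ if $\lambda\ell^2>\hat\lambda$. *)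

theory Defs
  imports "HOL-Analysis.Analysis"
begin

definition ellF :: "real \<Rightarrow> real \<Rightarrow> real" where
  "ellF x q = (LBINT \<theta>=0..x. 1 / sqrt (1 - q\<^sup>2 * (sin \<theta>)\<^sup>2))"

definition ellE :: "real \<Rightarrow> real \<Rightarrow> real" where
  "ellE x q = (LBINT \<theta>=0..x. sqrt (1 - q\<^sup>2 * (sin \<theta>)\<^sup>2))"

definition ellKc :: "real \<Rightarrow> real" where
  "ellKc q = ellF (pi / 2) q"

definition ellEc :: "real \<Rightarrow> real" where
  "ellEc q = ellE (pi / 2) q"

definition jam :: "real \<Rightarrow> real \<Rightarrow> real" where
  "jam y q = (THE x. ellF x q = y)"

definition jcn :: "real \<Rightarrow> real \<Rightarrow> real" where
  "jcn y q = cos (jam y q)"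

definition qstar :: real where
  "qstar = (THE q. 0 < q \<and> q < 1 \<and> 2 * ellEc q - ellKc q = 0)"

definition fpar :: "real \<Rightarrow> real" where
  "fpar q = (4*q^4 - 5*q\<^sup>2 + 1) * ellKc q + (-8*q^4 + 8*q\<^sup>2 - 1) * ellEc q"

definition gpar :: "real \<Rightarrow> real" where
  "gpar q = 8 * (2 * ellEc q - ellKc q)\<^sup>2 * (2*q\<^sup>2 - 1)"

definition qhat :: real where
  "qhat = (THE q. 1 / sqrt 2 \<le> q \<and> q < 1 \<and> fpar q = 0)"

definition lamhat :: real where
  "lamhat = gpar qhat"

definition q1 :: "real \<Rightarrow> real" where
  "q1 c = (THE q. 1 / sqrt 2 < q \<and> q \<le> qhat \<and> gpar q = c)"

definition q2 :: "real \<Rightarrow> real" where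
  "q2 c = (THE q. qhat \<le> q \<and> q < qstar \<and> gpar q = c)"

text \<open>The elastica arc with modulus q joining (0,0) to (l,0), on [0, 2K(q)/alpha].\<close>
definition arc_alpha :: "real \<Rightarrow> real \<Rightarrow> real" where
  "arc_alpha l q = 2 / l * (2 * ellEc q - ellKc q)"

definition arc_len :: "real \<Rightarrow> real \<Rightarrow> real" where
  "arc_len l q = 2 * ellKc q / arc_alpha l q"

definition arc_curve :: "real \<Rightarrow> real \<Rightarrow> real \<Rightarrow> real \<times> real" where
  "arc_curve l q s =
     (let \<alpha> = arc_alpha l q in
      ((2 * ellE (jam (\<alpha> * s - ellKc q) q) q + 2 * ellEc q - \<alpha> * s) / \<alpha>,
       (2 * q * jcn (\<alpha> * s - ellKc q) q) / \<alpha>))"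

definition arclength :: "(real \<Rightarrow> 'a::real_normed_vector) \<Rightarrow> real \<Rightarrow> real \<Rightarrow> real" where
  "arclength c a t = integral {a..t} (\<lambda>\<tau>. norm (vector_derivative c (at \<tau>)))"

definition const_speed_reparam ::
  "(real \<Rightarrow> 'a::real_normed_vector) \<Rightarrow> real \<Rightarrow> real \<Rightarrow> real \<Rightarrow> 'a" where
  "const_speed_reparam c a b x =
     c (THE t. t \<in> {a..b} \<and> arclength c a t = x * arclength c a b)"

definition gamma_sarc_bar :: "real \<Rightarrow> real \<Rightarrow> real \<Rightarrow> real \<times> real" where
  "gamma_sarc_bar lam l =
     (let q = q1 (lam * l\<^sup>2) in const_speed_reparam (arc_curve l q) 0 (arc_len l q))"

definition gamma_larc_bar :: "real \<Rightarrow> real \<Rightarrow> real \<Rightarrow> real \<times> real" where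
  "gamma_larc_bar lam l =
     (let q = q2 (lam * l\<^sup>2) in const_speed_reparam (arc_curve l q) 0 (arc_len l q))"

definition gamma_seg :: "real \<Rightarrow> real \<Rightarrow> real \<times> real" where
  "gamma_seg l x = (l * x, 0)"

definition omega :: "real \<Rightarrow> real \<Rightarrow> (real \<Rightarrow> real \<times> real) set" where
  "omega lam l =
     (if lam * l\<^sup>2 \<le> lamhat
      then {gamma_seg l, gamma_larc_bar lam l, gamma_sarc_bar lam l}
      else {gamma_seg l})"

end

theory Submission
  imports Defs
begin

lemma LBINT_deriv:
  fixes f :: "real \<Rightarrow> real"
  assumes "continuous_on UNIV f"
  shows "((\<lambda>u. LBINT y=0..u. f y) has_real_derivative f x) (at x)"
proof -
  have "((\<lambda>u. LBINT y=0..u. f y) has_vector_derivative f x) (at x within {-\<bar>x\<bar>-1..\<bar>x\<bar>+1})"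
    using interval_integral_FTC2[of "-\<bar>x\<bar>-1" 0 "\<bar>x\<bar>+1" f x] continuous_on_subset[OF assms]
    by (simp add: zero_ereal_def)
  moreover have "x \<in> interior {-\<bar>x\<bar>-1..\<bar>x\<bar>+1}" by auto
  ultimately have "((\<lambda>u. LBINT y=0..u. f y) has_vector_derivative f x) (at x)"
    using at_within_interior by metis
  then show ?thesis by (simp add: has_real_derivative_iff_has_vector_derivative)
qed

lemma D_pos: "(q::real)^2 < 1 \<Longrightarrow> 0 < 1 - q^2 * (sin t)^2"
proof -
  assume a: "q^2 < 1"
  have "(sin t)^2 \<le> 1" by (simp add: abs_square_le_1)
  then have "q^2 * (sin t)^2 \<le> q^2" by (simp add: mult_left_le)
  then show ?thesis using a by linarith
qed

lemma D_le1: "1 - (q::real)^2 * (sin t)^2 \<le> 1" by simp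

lemma ellF_deriv: assumes "q^2 < 1"
  shows "((\<lambda>x. ellF x q) has_real_derivative 1 / sqrt (1 - q^2 * (sin x)^2)) (at x)"
  unfolding ellF_def
  by (rule LBINT_deriv) (use D_pos[OF assms] in \<open>auto intro!: continuous_intros simp: less_imp_neq\<close>)

lemma ellE_deriv: assumes "q^2 < 1"
  shows "((\<lambda>x. ellE x q) has_real_derivative sqrt (1 - q^2 * (sin x)^2)) (at x)"
  unfolding ellE_def
  by (rule LBINT_deriv) (auto intro!: continuous_intros)


lemma ellF_0[simp]: "ellF 0 q = 0" by (simp add: ellF_def zero_ereal_def)
lemma ellE_0[simp]: "ellE 0 q = 0" by (simp add: ellE_def zero_ereal_def)

lemma sqrtD_pos: "q^2 < 1 \<Longrightarrow> 0 < sqrt (1 - q^2 * (sin x)^2)"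
  using D_pos by auto

lemma sqrtD_le1: "sqrt (1 - q^2 * (sin x)^2) \<le> 1"
  by simp

lemma ellF_less: assumes "q^2 < 1" "a < b" shows "ellF a q < ellF b q"
  using DERIV_pos_imp_increasing[OF assms(2), of "\<lambda>x. ellF x q"] ellF_deriv[OF assms(1)] sqrtD_pos[OF assms(1)]
  by force

lemma ellF_le: assumes "q^2 < 1" "a \<le> b" shows "ellF a q \<le> ellF b q"
  using ellF_less[OF assms(1), of a b] assms(2) by (cases "a = b") auto

lemma ellF_ge: assumes "q^2 < 1" "a \<le> b" shows "b - a \<le> ellF b q - ellF a q"
proof -
  have "(\<lambda>x. ellF x q - x) a \<le> (\<lambda>x. ellF x q - x) b"
  proof (rule DERIV_nonneg_imp_nondecreasing[OF assms(2)])
    fix x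
    have "((\<lambda>x. ellF x q - x) has_real_derivative 1 / sqrt (1 - q^2 * (sin x)^2) - 1) (at x)"
      by (intro DERIV_diff ellF_deriv[OF assms(1)] DERIV_ident)
    moreover have "1 / sqrt (1 - q^2 * (sin x)^2) - 1 \<ge> 0"
      using sqrtD_pos[OF assms(1), of x] sqrtD_le1[of q x] by (simp add: field_simps)
    ultimately show "\<exists>y. ((\<lambda>x. ellF x q - x) has_real_derivative y) (at x) \<and> 0 \<le> y" by blast
  qed
  then show ?thesis by simp
qed

lemma ellF_odd: assumes "q^2 < 1" shows "ellF (-x) q = - ellF x q"
proof -
  have d: "((\<lambda>x. ellF (-x) q + ellF x q) has_real_derivative 0) (at x)" for x
  proof -
    have "((\<lambda>x. ellF (-x) q) has_real_derivative (1 / sqrt (1 - q^2 * (sin (-x))^2)) * (-1)) (at x)"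
      by (rule DERIV_chain2[OF ellF_deriv[OF assms]]) (auto intro!: derivative_eq_intros)
    from DERIV_add[OF this ellF_deriv[OF assms]] show ?thesis by simp
  qed
  have "ellF (-x) q + ellF x q = ellF (-0) q + ellF 0 q"
    using DERIV_isconst_all[OF allI[OF d]] by blast
  then show ?thesis by simp
qed

lemma ellE_odd: assumes "q^2 < 1" shows "ellE (-x) q = - ellE x q"
proof -
  have d: "((\<lambda>x. ellE (-x) q + ellE x q) has_real_derivative 0) (at x)" for x
  proof -
    have "((\<lambda>x. ellE (-x) q) has_real_derivative (sqrt (1 - q^2 * (sin (-x))^2)) * (-1)) (at x)"
      by (rule DERIV_chain2[OF ellE_deriv[OF assms]]) (auto intro!: derivative_eq_intros)
    from DERIV_add[OF this ellE_deriv[OF assms]] show ?thesis by simp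
  qed
  have "ellE (-x) q + ellE x q = ellE (-0) q + ellE 0 q"
    using DERIV_isconst_all[OF allI[OF d]] by blast
  then show ?thesis by simp
qed

lemma sqrtD_sq: "q^2 < 1 \<Longrightarrow> sqrt (1 - q^2 * (sin x)^2) * sqrt (1 - q^2 * (sin x)^2) = 1 - q^2 * (sin x)^2"
  using D_pos[of q x] by simp

lemma jam_ellF: assumes "q^2 < 1" shows "jam (ellF x q) q = x"
  unfolding jam_def
proof (rule the_equality)
  fix y assume "ellF y q = ellF x q"
  then show "y = x" using ellF_less[OF assms, of x y] ellF_less[OF assms, of y x]
    by (cases x y rule: linorder_cases) auto
qed simp

lemma ellF_surj: assumes "q^2 < 1" shows "\<exists>x. ellF x q = u"
proof (cases "0 \<le> u")
  case True
  have "u \<le> ellF u q" using ellF_ge[OF assms True] by simp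
  then show ?thesis
    using IVT[of "\<lambda>x. ellF x q" 0 u u] True DERIV_isCont[OF ellF_deriv[OF assms]] by auto
next
  case False
  have "ellF u q \<le> u" using ellF_ge[OF assms, of u 0] False by simp
  then show ?thesis
    using IVT[of "\<lambda>x. ellF x q" u u 0] False DERIV_isCont[OF ellF_deriv[OF assms]] by auto
qed

lemma ellF_jam: assumes "q^2 < 1" shows "ellF (jam u q) q = u"
proof -
  obtain x where "ellF x q = u" using ellF_surj[OF assms] by blast
  then show ?thesis using jam_ellF[OF assms, of x] by simp
qed

lemma jam_less: assumes "q^2 < 1" "u < v" shows "jam u q < jam v q"
proof (rule ccontr)
  assume "\<not> ?thesis"
  then have "ellF (jam v q) q \<le> ellF (jam u q) q" using ellF_le[OF assms(1)] by simp
  then show False using assms(2) by (simp add: ellF_jam[OF assms(1)])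
qed

lemma jam_deriv: assumes "q^2 < 1"
  shows "((\<lambda>u. jam u q) has_real_derivative sqrt (1 - q^2 * (sin (jam u q))^2)) (at u)"
proof -
  have c: "isCont (\<lambda>u. jam u q) (ellF (jam u q) q)"
    by (rule isCont_inverse_function[where d=1])
       (auto simp: jam_ellF[OF assms] intro: DERIV_isCont[OF ellF_deriv[OF assms]])
  have "((\<lambda>u. jam u q) has_real_derivative inverse (1 / sqrt (1 - q^2 * (sin (jam u q))^2))) (at u)"
    apply (rule DERIV_inverse_function[where f="\<lambda>x. ellF x q" and a="u-1" and b="u+1"])
    using ellF_deriv[OF assms] sqrtD_pos[OF assms, of "jam u q"] c by (auto simp: ellF_jam[OF assms])
  then show ?thesis by simp
qed

lemma h_deriv: assumes "q^2 < 1"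
  shows "((\<lambda>x. 2 * ellE x q - ellF x q) has_real_derivative
           (1 - 2 * q^2 * (sin x)^2) / sqrt (1 - q^2 * (sin x)^2)) (at x)"
proof -
  have "((\<lambda>x. 2 * ellE x q - ellF x q) has_real_derivative
           2 * sqrt (1 - q^2 * (sin x)^2) - 1 / sqrt (1 - q^2 * (sin x)^2)) (at x)"
    by (intro DERIV_diff DERIV_cmult ellE_deriv ellF_deriv assms)
  moreover have "2 * sqrt (1 - q^2 * (sin x)^2) - 1 / sqrt (1 - q^2 * (sin x)^2)
      = (1 - 2 * q^2 * (sin x)^2) / sqrt (1 - q^2 * (sin x)^2)"
    using sqrtD_pos[OF assms, of x] sqrtD_sq[OF assms, of x] by (simp add: field_simps)
  ultimately show ?thesis by simp
qed

lemma sin_sq_mono: assumes "0 \<le> x" "x \<le> y" "y \<le> pi/2" shows "(sin x)^2 \<le> (sin y)^2"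
proof -
  have "sin x \<le> sin y" using sin_monotone_2pi_le[of x y] assms by simp
  moreover have "0 \<le> sin x" using assms by (intro sin_ge_zero) auto
  ultimately show ?thesis by (simp add: power_mono)
qed

lemma h_pos: assumes "q^2 < 1" "0 < 2 * ellE (pi/2) q - ellF (pi/2) q" "0 < \<phi>" "\<phi> \<le> pi/2"
  shows "0 < 2 * ellE \<phi> q - ellF \<phi> q"
proof (cases "2 * q^2 * (sin \<phi>)^2 < 1")
  case True
  have "(\<lambda>x. 2 * ellE x q - ellF x q) 0 < (\<lambda>x. 2 * ellE x q - ellF x q) \<phi>"
  proof (rule DERIV_pos_imp_increasing[OF assms(3)])
    fix x assume x: "0 \<le> x" "x \<le> \<phi>"
    have "(sin x)^2 \<le> (sin \<phi>)^2" using sin_sq_mono[of x \<phi>] x assms by simp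
    then have "q^2 * (sin x)^2 \<le> q^2 * (sin \<phi>)^2" by (simp add: mult_left_mono)
    then have "0 < (1 - 2 * q^2 * (sin x)^2) / sqrt (1 - q^2 * (sin x)^2)"
      using True sqrtD_pos[OF assms(1), of x] by (intro divide_pos_pos) auto
    then show "\<exists>y. ((\<lambda>x. 2 * ellE x q - ellF x q) has_real_derivative y) (at x) \<and> 0 < y"
      using h_deriv[OF assms(1)] by blast
  qed
  then show ?thesis by simp
next
  case False
  have "(\<lambda>x. 2 * ellE x q - ellF x q) (pi/2) \<le> (\<lambda>x. 2 * ellE x q - ellF x q) \<phi>"
  proof (rule DERIV_nonpos_imp_nonincreasing[OF assms(4)])
    fix x assume x: "\<phi> \<le> x" "x \<le> pi/2"
    have "(sin \<phi>)^2 \<le> (sin x)^2" using sin_sq_mono[of \<phi> x] x assms by simp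
    then have "q^2 * (sin \<phi>)^2 \<le> q^2 * (sin x)^2" by (simp add: mult_left_mono)
    then have "(1 - 2 * q^2 * (sin x)^2) / sqrt (1 - q^2 * (sin x)^2) \<le> 0"
      using False sqrtD_pos[OF assms(1), of x] by (intro divide_nonpos_pos) auto
    then show "\<exists>y. ((\<lambda>x. 2 * ellE x q - ellF x q) has_real_derivative y) (at x) \<and> y \<le> 0"
      using h_deriv[OF assms(1)] by blast
  qed
  then show ?thesis using assms(2) by simp
qed

lemma arc_deriv:
  fixes l q s :: real
  assumes "q^2 < 1" "arc_alpha l q \<noteq> 0"
  defines "\<phi> \<equiv> jam (arc_alpha l q * s - ellKc q) q"
  shows "(arc_curve l q has_vector_derivative
           (1 - 2 * q^2 * (sin \<phi>)^2, - 2 * q * sin \<phi> * sqrt (1 - q^2 * (sin \<phi>)^2))) (at s)"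
proof -
  define a where "a = arc_alpha l q"
  define K where "K = ellKc q"
  define S where "S = sqrt (1 - q^2 * (sin \<phi>)^2)"
  have jd: "((\<lambda>s. jam (a * s - K) q) has_real_derivative S * a) (at s)"
    unfolding S_def \<phi>_def a_def[symmetric] K_def[symmetric]
    by (rule DERIV_chain2[OF jam_deriv[OF assms(1)]]) (auto intro!: derivative_eq_intros)
  have e: "((\<lambda>s. ellE (jam (a * s - K) q) q) has_real_derivative S * (S * a)) (at s)"
    using DERIV_chain2[OF ellE_deriv[OF assms(1)] jd] unfolding S_def \<phi>_def a_def K_def .
  have c: "((\<lambda>s. cos (jam (a * s - K) q)) has_real_derivative - sin \<phi> * (S * a)) (at s)"
    using DERIV_chain2[OF DERIV_cos jd] unfolding \<phi>_def a_def K_def .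
  have d1: "((\<lambda>s. (2 * ellE (jam (a * s - K) q) q + 2 * ellEc q - a * s) / a) has_real_derivative
      (2 * (S * (S * a)) - a) / a) (at s)"
    using DERIV_cdivide[OF DERIV_diff[OF DERIV_add[OF DERIV_cmult[OF e, of 2] DERIV_const[of "2 * ellEc q"]] DERIV_cmult[OF DERIV_ident, of a]], of a]
    by simp
  have d2: "((\<lambda>s. 2 * q * cos (jam (a * s - K) q) / a) has_real_derivative
      2 * q * (- sin \<phi> * (S * a)) / a) (at s)"
    using DERIV_cdivide[OF DERIV_cmult[OF c, of "2*q"], of a] by simp
  have "arc_curve l q = (\<lambda>s. ((2 * ellE (jam (a * s - K) q) q + 2 * ellEc q - a * s) / a,
                2 * q * cos (jam (a * s - K) q) / a))"
    by (auto simp: arc_curve_def a_def K_def jcn_def Let_def)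
  moreover have "(... has_vector_derivative ((2 * (S * (S * a)) - a) / a, 2 * q * (- sin \<phi> * (S * a)) / a)) (at s)"
    using d1 d2 by (intro has_vector_derivative_Pair) (auto simp: has_real_derivative_iff_has_vector_derivative)
  moreover have "a \<noteq> 0 \<Longrightarrow> (2 * (S * (S * a)) - a) / a = 1 - 2 * q^2 * (sin \<phi>)^2"
    using sqrtD_sq[OF assms(1), of \<phi>] unfolding S_def by (simp add: field_simps)
  moreover have "a \<noteq> 0 \<Longrightarrow> 2 * q * (- sin \<phi> * (S * a)) / a = - 2 * q * sin \<phi> * S"
    by (simp add: field_simps)
  ultimately show ?thesis unfolding S_def using assms(2) a_def by (simp add: mult.assoc)
qed


lemma jam_le: assumes "q^2 < 1" "u \<le> v" shows "jam u q \<le> jam v q"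
  using jam_less[OF assms(1), of u v] assms(2) by (cases "u = v") auto

lemma arc_inj:
  fixes l q :: real
  assumes q: "0 < q" "q^2 < 1" and G: "0 < 2 * ellEc q - ellKc q" and l: "0 < l"
  shows "inj_on (const_speed_reparam (arc_curve l q) 0 (arc_len l q)) {0..1}"
proof -
  define a where "a = arc_alpha l q"
  define K where "K = ellKc q"
  define L where "L = arc_len l q"
  define c where "c = arc_curve l q"
  have a: "0 < a" unfolding a_def arc_alpha_def using G l by simp
  have "pi/2 \<le> ellF (pi/2) q" using ellF_ge[OF q(2), of 0 "pi/2"] by simp
  then have Kpos: "0 < K" unfolding K_def ellKc_def using pi_gt_zero by linarith
  have L: "0 < L" unfolding L_def arc_len_def using Kpos a by (simp add: a_def K_def)
  have speed: "norm (vector_derivative c (at s)) = 1" for s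
  proof -
    define \<phi> where "\<phi> = jam (arc_alpha l q * s - ellKc q) q"
    have "vector_derivative c (at s) = (1 - 2 * q^2 * (sin \<phi>)^2, - 2 * q * sin \<phi> * sqrt (1 - q^2 * (sin \<phi>)^2))"
      unfolding c_def \<phi>_def using a a_def by (intro vector_derivative_at arc_deriv q) auto
    moreover have "(1 - 2 * q^2 * (sin \<phi>)^2)^2 + (- 2 * q * sin \<phi> * sqrt (1 - q^2 * (sin \<phi>)^2))^2 = 1"
    proof -
      have "(sqrt (1 - q^2 * (sin \<phi>)^2))^2 = 1 - q^2 * (sin \<phi>)^2" using D_pos[OF q(2), of \<phi>] by simp
      then show ?thesis by (simp add: power_mult_distrib algebra_simps power2_eq_square)
    qed
    ultimately show ?thesis by (simp add: norm_Pair)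
  qed
  have arcl: "arclength c 0 t = t" if "0 \<le> t" for t
  proof -
    have "arclength c 0 t = integral {0..t} (\<lambda>_. 1::real)"
      unfolding arclength_def using speed by simp
    then show ?thesis using that by simp
  qed
  have rep: "const_speed_reparam c 0 L x = c (x * L)" if x: "x \<in> {0..1}" for x
  proof -
    have xl: "x * L \<in> {0..L}" using x L by (auto simp: mult_le_cancel_right1)
    have "(THE t. t \<in> {0..L} \<and> arclength c 0 t = x * arclength c 0 L) = x * L"
    proof (rule the_equality)
      show "x * L \<in> {0..L} \<and> arclength c 0 (x * L) = x * arclength c 0 L"
        using xl arcl L by auto
    next
      fix t assume "t \<in> {0..L} \<and> arclength c 0 t = x * arclength c 0 L"
      then show "t = x * L" using arcl L by auto
    qed
    then show ?thesis unfolding const_speed_reparam_def by simp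
  qed
  have jK: "jam K q = pi/2" unfolding K_def ellKc_def by (rule jam_ellF[OF q(2)])
  have jmK: "jam (-K) q = -(pi/2)" unfolding K_def ellKc_def
    using jam_ellF[OF q(2), of "-(pi/2)"] ellF_odd[OF q(2), of "pi/2"] by simp
  have form: "c s = ((2 * ellE \<phi> q + 2 * ellEc q - (ellF \<phi> q + K)) / a, 2 * q * cos \<phi> / a)"
    if "\<phi> = jam (a * s - K) q" for s \<phi>
    using that ellF_jam[OF q(2), of "a * s - K"]
    by (simp add: c_def arc_curve_def a_def K_def jcn_def Let_def)
  have hodd: "2 * ellE (-x) q - ellF (-x) q = - (2 * ellE x q - ellF x q)" for x
    using ellE_odd[OF q(2)] ellF_odd[OF q(2)] by simp
  have hnz: "2 * ellE x q - ellF x q \<noteq> 0" if "x \<noteq> 0" "\<bar>x\<bar> \<le> pi/2" for x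
  proof (cases "0 < x")
    case True
    then show ?thesis using h_pos[OF q(2) _ True] G that by (simp add: ellEc_def ellKc_def)
  next
    case False
    then have "0 < -x" using that by simp
    then have "0 < 2 * ellE (-x) q - ellF (-x) q"
      using h_pos[OF q(2), of "-x"] G that by (simp add: ellEc_def ellKc_def)
    then show ?thesis using hodd[of x] by simp
  qed
  have Pinj: "\<phi>1 = \<phi>2" if ph: "\<bar>\<phi>1\<bar> \<le> pi/2" "\<bar>\<phi>2\<bar> \<le> pi/2"
    and eq: "((2 * ellE \<phi>1 q + 2 * ellEc q - (ellF \<phi>1 q + K)) / a, 2 * q * cos \<phi>1 / a) =
             ((2 * ellE \<phi>2 q + 2 * ellEc q - (ellF \<phi>2 q + K)) / a, 2 * q * cos \<phi>2 / a)" for \<phi>1 \<phi>2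
  proof -
    have e1: "2 * ellE \<phi>1 q - ellF \<phi>1 q = 2 * ellE \<phi>2 q - ellF \<phi>2 q"
      using eq a by (simp add: field_simps)
    have "cos \<phi>1 = cos \<phi>2" using eq a q by (simp add: field_simps)
    then have "cos \<bar>\<phi>1\<bar> = cos \<bar>\<phi>2\<bar>" by (simp add: abs_real_def)
    moreover have "\<bar>\<phi>1\<bar> \<le> pi" "\<bar>\<phi>2\<bar> \<le> pi" using ph pi_gt_zero by linarith+
    ultimately have "\<bar>\<phi>1\<bar> = \<bar>\<phi>2\<bar>" using cos_inj_pi[of "\<bar>\<phi>1\<bar>" "\<bar>\<phi>2\<bar>"] by simp
    then consider "\<phi>1 = \<phi>2" | "\<phi>2 = - \<phi>1" "\<phi>1 \<noteq> 0" by (auto simp: abs_real_def split: if_splits)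
    then show ?thesis
    proof cases
      case 2
      then have "2 * ellE \<phi>1 q - ellF \<phi>1 q = 0" using e1 hodd[of \<phi>1] by simp
      then show ?thesis using hnz[of \<phi>1] 2 ph by simp
    qed
  qed
  have cinj: "inj_on c {0..L}"
  proof (rule inj_onI)
    fix s1 s2 assume s: "s1 \<in> {0..L}" "s2 \<in> {0..L}" and ceq: "c s1 = c s2"
    have u: "-K \<le> a * s - K \<and> a * s - K \<le> K" if "s \<in> {0..L}" for s
    proof -
      have "a * s \<le> a * L" using that a by (simp add: mult_left_mono)
      also have "a * L = 2 * K" unfolding L_def arc_len_def using a by (simp add: a_def K_def)
      finally show ?thesis using that a by simp
    qed
    have ph: "\<bar>jam (a * s - K) q\<bar> \<le> pi/2" if "s \<in> {0..L}" for s
      using jam_le[OF q(2), of "-K" "a * s - K"] jam_le[OF q(2), of "a * s - K" K] u[OF that] jK jmK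
      by auto
    have "jam (a * s1 - K) q = jam (a * s2 - K) q"
      using Pinj[OF ph[OF s(1)] ph[OF s(2)]] ceq form[OF refl, of s1] form[OF refl, of s2] by simp
    then have "ellF (jam (a * s1 - K) q) q = ellF (jam (a * s2 - K) q) q" by simp
    then have "a * s1 = a * s2" by (simp add: ellF_jam[OF q(2)])
    then show "s1 = s2" using a by simp
  qed
  show ?thesis
  proof (rule inj_onI)
    fix x y assume xy: "x \<in> {0..1}" "y \<in> {0..1}"
      and eq: "const_speed_reparam (arc_curve l q) 0 (arc_len l q) x = const_speed_reparam (arc_curve l q) 0 (arc_len l q) y"
    then have "c (x * L) = c (y * L)" using rep[OF xy(1)] rep[OF xy(2)] by (simp add: c_def L_def)
    moreover have "x * L \<in> {0..L}" "y * L \<in> {0..L}" using xy L by (auto simp: mult_le_cancel_right1)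
    ultimately have "x * L = y * L" using cinj by (auto dest: inj_onD)
    then show "x = y" using L by simp
  qed
qed

definition Kf :: "real \<Rightarrow> real" where
  "Kf q = integral {0..pi/2} (\<lambda>t. 1 / sqrt (1 - q^2 * (sin t)^2))"
definition Ef :: "real \<Rightarrow> real" where
  "Ef q = integral {0..pi/2} (\<lambda>t. sqrt (1 - q^2 * (sin t)^2))"
definition Kf' :: "real \<Rightarrow> real" where
  "Kf' q = integral {0..pi/2} (\<lambda>t. q * (sin t)^2 / ((1 - q^2 * (sin t)^2) * sqrt (1 - q^2 * (sin t)^2)))"
definition Ef' :: "real \<Rightarrow> real" where
  "Ef' q = integral {0..pi/2} (\<lambda>t. - (q * (sin t)^2) / sqrt (1 - q^2 * (sin t)^2))"
definition J3 :: "real \<Rightarrow> real" where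
  "J3 q = integral {0..pi/2} (\<lambda>t. 1 / ((1 - q^2 * (sin t)^2) * sqrt (1 - q^2 * (sin t)^2)))"

lemma ellKc_eq: assumes "q^2 < 1" shows "ellKc q = Kf q"
proof -
  have "continuous_on {0..pi/2} (\<lambda>t. 1 / sqrt (1 - q^2 * (sin t)^2))"
    using D_pos[OF assms] by (auto intro!: continuous_intros simp: less_imp_neq)
  note c = this
  show ?thesis
    unfolding ellKc_def ellF_def Kf_def
    using interval_integral_eq_integral[OF _ borel_integrable_atLeastAtMost'[OF c]] by (simp add: zero_ereal_def)
qed

lemma ellEc_eq: shows "ellEc q = Ef q"
proof -
  have "continuous_on {0..pi/2} (\<lambda>t. sqrt (1 - q^2 * (sin t)^2))"
    by (auto intro!: continuous_intros)
  note c = this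
  show ?thesis
    unfolding ellEc_def ellE_def Ef_def
    using interval_integral_eq_integral[OF _ borel_integrable_atLeastAtMost'[OF c]] by (simp add: zero_ereal_def)
qed

lemma cont_U: "continuous_on ({-1<..<1} \<times> X) (\<lambda>(q, t). f q t)" if
  "continuous_on ({-1<..<1} \<times> X) (\<lambda>x. f (fst x) (snd x))" for f :: "real \<Rightarrow> real \<Rightarrow> real"
  using that by (simp add: case_prod_beta)

lemma U_sq: "q \<in> {-1<..<1} \<Longrightarrow> (q::real)^2 < 1"
  by (simp add: abs_square_less_1 abs_less_iff)

lemma D_pos': fixes q t :: real assumes "q \<in> {-1<..<1}" shows "0 < 1 - q^2 * (sin t)^2"
  using D_pos[OF U_sq[OF assms]] by simp


lemma dK_pt: fixes x S :: real assumes "0 < 1 - x^2 * S"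
  shows "((\<lambda>x. 1 / sqrt (1 - x^2 * S)) has_real_derivative x * S / ((1 - x^2 * S) * sqrt (1 - x^2 * S))) (at x within U)"
proof -
  have sq: "(sqrt (1 - x^2*S))^2 = 1 - x^2*S" using assms by simp
  show ?thesis
    using assms sq by (auto intro!: derivative_eq_intros simp: field_simps power_divide)
qed

lemma dE_pt: fixes x S :: real assumes "0 < 1 - x^2 * S"
  shows "((\<lambda>x. sqrt (1 - x^2 * S)) has_real_derivative - (x * S) / sqrt (1 - x^2 * S)) (at x within U)"
proof -
  have "((\<lambda>x. sqrt (1 - x^2 * S)) has_real_derivative
     (inverse (sqrt (1 - x^2 * S)) / 2) * (- (2 * x * S))) (at x within U)"
    using assms by (auto intro!: derivative_eq_intros)
  moreover have "(inverse (sqrt (1 - x^2 * S)) / 2) * (- (2 * x * S)) = - (x * S) / sqrt (1 - x^2 * S)"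
    using assms by (simp add: field_simps)
  ultimately show ?thesis by simp
qed


lemma Kf_deriv: assumes q: "q \<in> {-1<..<1}" shows "(Kf has_real_derivative Kf' q) (at q)"
proof -
  let ?U = "{-1<..<1::real}"
  have "((\<lambda>q. integral (cbox 0 (pi/2)) (\<lambda>t. 1 / sqrt (1 - q^2 * (sin t)^2))) has_field_derivative
     integral (cbox 0 (pi/2)) (\<lambda>t. q * (sin t)^2 / ((1 - q^2 * (sin t)^2) * sqrt (1 - q^2 * (sin t)^2)))) (at q within ?U)"
  proof (rule leibniz_rule_field_derivative[where fx = "\<lambda>q t. q * (sin t)^2 / ((1 - q^2 * (sin t)^2) * sqrt (1 - q^2 * (sin t)^2))"])
    fix x t :: real assume "x \<in> ?U" "t \<in> cbox 0 (pi/2)"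
    then show "((\<lambda>x. 1 / sqrt (1 - x^2 * (sin t)^2)) has_field_derivative
       x * (sin t)^2 / ((1 - x^2 * (sin t)^2) * sqrt (1 - x^2 * (sin t)^2))) (at x within ?U)"
      by (intro dK_pt D_pos')
  next
    fix x :: real assume "x \<in> ?U"
    then show "(\<lambda>t. 1 / sqrt (1 - x^2 * (sin t)^2)) integrable_on cbox 0 (pi/2)"
      using D_pos'[of x] by (intro integrable_continuous) (auto intro!: continuous_intros simp: less_imp_neq)
  next
    have "continuous_on (?U \<times> cbox 0 (pi/2)) (\<lambda>z. fst z * (sin (snd z))^2 / ((1 - (fst z)^2 * (sin (snd z))^2) * sqrt (1 - (fst z)^2 * (sin (snd z))^2)))"
      using D_pos' by (auto intro!: continuous_intros simp: less_imp_neq)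
    then show "continuous_on (?U \<times> cbox 0 (pi/2)) (\<lambda>(x, t). x * (sin t)^2 / ((1 - x^2 * (sin t)^2) * sqrt (1 - x^2 * (sin t)^2)))"
      by (simp add: case_prod_beta)
  qed (use q in auto)
  then show ?thesis unfolding Kf_def Kf'_def cbox_interval at_within_open[OF q open_greaterThanLessThan] .
qed

lemma Ef_deriv: assumes q: "q \<in> {-1<..<1}" shows "(Ef has_real_derivative Ef' q) (at q)"
proof -
  let ?U = "{-1<..<1::real}"
  have "((\<lambda>q. integral (cbox 0 (pi/2)) (\<lambda>t. sqrt (1 - q^2 * (sin t)^2))) has_field_derivative
     integral (cbox 0 (pi/2)) (\<lambda>t. - (q * (sin t)^2) / sqrt (1 - q^2 * (sin t)^2))) (at q within ?U)"
  proof (rule leibniz_rule_field_derivative[where fx = "\<lambda>q t. - (q * (sin t)^2) / sqrt (1 - q^2 * (sin t)^2)"])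
    fix x t :: real assume "x \<in> ?U" "t \<in> cbox 0 (pi/2)"
    then show "((\<lambda>x. sqrt (1 - x^2 * (sin t)^2)) has_field_derivative
       - (x * (sin t)^2) / sqrt (1 - x^2 * (sin t)^2)) (at x within ?U)"
      by (intro dE_pt D_pos')
  next
    fix x :: real assume "x \<in> ?U"
    then show "(\<lambda>t. sqrt (1 - x^2 * (sin t)^2)) integrable_on cbox 0 (pi/2)"
      by (intro integrable_continuous) (auto intro!: continuous_intros)
  next
    have "continuous_on (?U \<times> cbox 0 (pi/2)) (\<lambda>z. - (fst z * (sin (snd z))^2) / sqrt (1 - (fst z)^2 * (sin (snd z))^2))"
      using D_pos' by (auto intro!: continuous_intros simp: less_imp_neq)
    then show "continuous_on (?U \<times> cbox 0 (pi/2)) (\<lambda>(x, t). - (x * (sin t)^2) / sqrt (1 - x^2 * (sin t)^2))"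
      by (simp add: case_prod_beta)
  qed (use q in auto)
  then show ?thesis unfolding Ef_def Ef'_def cbox_interval at_within_open[OF q open_greaterThanLessThan] .
qed


lemma cont_int: "continuous_on {0..pi/2} f \<Longrightarrow> (f::real\<Rightarrow>real) integrable_on {0..pi/2}"
  by (rule integrable_continuous_interval)

lemma R3_alg: fixes xr xd xs xc xq :: real assumes r: "0<xr" and rr: "xr*xr = xd" and xd: "xd = 1 - xq^2*xs^2" and xc: "xc^2 = 1 - xs^2"
 shows "xr - xq^2 * (((xc*xc - xs*xs)*xr + xs*xc*(inverse xr*(xc*(xs*xq^2))))/xd) = (1 - xq^2)/(xd*xr)"
proof -
  have Dp: "0 < xd" using r rr by (metis mult_pos_pos)
  have "xr - xq^2 * (((xc*xc - xs*xs)*xr + xs*xc*(inverse xr*(xc*(xs*xq^2))))/xd) = (xd*(xr*xr) - xq^2*((xc*xc-xs*xs)*(xr*xr) + xq^2*xs^2*xc^2))/(xd*xr)"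
    using r Dp by (simp add: field_simps power2_eq_square)
  also have "xd*(xr*xr) - xq^2*((xc*xc-xs*xs)*(xr*xr) + xq^2*xs^2*xc^2) = 1 - xq^2"
  proof -
    have "xc*xc = 1 - xs^2" using xc by (simp add: power2_eq_square)
    then show ?thesis using rr xd by algebra
  qed
  finally show ?thesis .
qed

lemma R2_alg: fixes D a :: real assumes "0 < D" "a = 1 - D"
  shows "a / (D * sqrt D) = 1 / (D * sqrt D) - 1 / sqrt D"
  using assms by (simp add: field_simps)

lemma R1: assumes q: "q^2 < 1" shows "q * Ef' q = Ef q - Kf q"
proof -
  have "q * Ef' q = integral {0..pi/2} (\<lambda>t. q * (- (q * (sin t)^2) / sqrt (1 - q^2 * (sin t)^2)))"
    unfolding Ef'_def by (rule integral_mult_right[symmetric])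
  also have "\<dots> = integral {0..pi/2} (\<lambda>t. sqrt (1 - q^2 * (sin t)^2) - 1 / sqrt (1 - q^2 * (sin t)^2))"
  proof (rule integral_cong)
    fix t
    have "sqrt (1 - q^2 * (sin t)^2) * sqrt (1 - q^2 * (sin t)^2) = 1 - q^2 * (sin t)^2"
      by (rule sqrtD_sq[OF q])
    then show "q * (- (q * (sin t)^2) / sqrt (1 - q^2 * (sin t)^2)) = sqrt (1 - q^2 * (sin t)^2) - 1 / sqrt (1 - q^2 * (sin t)^2)"
      using sqrtD_pos[OF q, of t] by (simp add: field_simps power2_eq_square)
  qed
  also have "\<dots> = Ef q - Kf q"
    unfolding Ef_def Kf_def
    by (rule integral_diff; rule cont_int) (use D_pos[OF q] in \<open>auto intro!: continuous_intros simp: less_imp_neq\<close>)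
  finally show ?thesis .
qed

lemma R2: assumes q: "q^2 < 1" shows "q * Kf' q = J3 q - Kf q"
proof -
  have "q * Kf' q = integral {0..pi/2} (\<lambda>t. q * (q * (sin t)^2 / ((1 - q^2 * (sin t)^2) * sqrt (1 - q^2 * (sin t)^2))))"
    unfolding Kf'_def by (rule integral_mult_right[symmetric])
  also have "\<dots> = integral {0..pi/2} (\<lambda>t. 1 / ((1 - q^2 * (sin t)^2) * sqrt (1 - q^2 * (sin t)^2)) - 1 / sqrt (1 - q^2 * (sin t)^2))"
  proof (rule integral_cong)
    fix t
    show "q * (q * (sin t)^2 / ((1 - q^2 * (sin t)^2) * sqrt (1 - q^2 * (sin t)^2))) =
       1 / ((1 - q^2 * (sin t)^2) * sqrt (1 - q^2 * (sin t)^2)) - 1 / sqrt (1 - q^2 * (sin t)^2)"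
      using R2_alg[OF D_pos[OF q, of t], of "q^2 * (sin t)^2"] by (simp add: power2_eq_square mult.assoc)
  qed
  also have "\<dots> = J3 q - Kf q"
    unfolding J3_def Kf_def
    by (rule integral_diff; rule cont_int) (use D_pos[OF q] in \<open>auto intro!: continuous_intros simp: less_imp_neq\<close>)
  finally show ?thesis .
qed

lemma w_deriv: assumes q: "q^2 < 1"
  shows "((\<lambda>t. sin t * cos t / sqrt (1 - q^2 * (sin t)^2)) has_real_derivative
     ((cos t * cos t - sin t * sin t) * sqrt (1 - q^2 * (sin t)^2) +
      sin t * cos t * (inverse (sqrt (1 - q^2 * (sin t)^2)) * (cos t * (sin t * q^2)))) /
     (1 - q^2 * (sin t)^2)) (at t within X)"
proof -
  have sq: "(sqrt (1 - q^2*(sin t)^2))^2 = 1 - q^2*(sin t)^2" using D_pos[OF q, of t] by simp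
  show ?thesis
    using D_pos[OF q, of t] sq by (auto intro!: derivative_eq_intros)
qed

lemma R3: assumes q: "q^2 < 1" shows "(1 - q^2) * J3 q = Ef q"
proof -
  define W where "W t = ((cos t * cos t - sin t * sin t) * sqrt (1 - q^2 * (sin t)^2) +
      sin t * cos t * (inverse (sqrt (1 - q^2 * (sin t)^2)) * (cos t * (sin t * q^2)))) /
     (1 - q^2 * (sin t)^2)" for t
  have iw: "(W has_integral ((\<lambda>t. sin t * cos t / sqrt (1 - q^2 * (sin t)^2)) (pi/2) -
       (\<lambda>t. sin t * cos t / sqrt (1 - q^2 * (sin t)^2)) 0)) {0..pi/2}"
    by (rule fundamental_theorem_of_calculus)
       (auto simp: W_def has_real_derivative_iff_has_vector_derivative[symmetric] intro!: w_deriv q)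
  then have iw0: "(W has_integral 0) {0..pi/2}" by simp
  have iE: "((\<lambda>t. sqrt (1 - q^2 * (sin t)^2)) has_integral Ef q) {0..pi/2}"
    unfolding Ef_def by (rule integrable_integral, rule cont_int) (auto intro!: continuous_intros)
  have "((\<lambda>t. sqrt (1 - q^2 * (sin t)^2) - q^2 * W t) has_integral (Ef q - q^2 * 0)) {0..pi/2}"
    by (intro has_integral_diff iE has_integral_mult_right iw0)
  moreover have "sqrt (1 - q^2 * (sin t)^2) - q^2 * W t = (1 - q^2) * (1 / ((1 - q^2 * (sin t)^2) * sqrt (1 - q^2 * (sin t)^2)))" for t
  proof -
    have "sqrt (1 - q^2 * (sin t)^2) - q^2 * W t = (1 - q^2) / ((1 - q^2 * (sin t)^2) * sqrt (1 - q^2 * (sin t)^2))"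
      unfolding W_def
      by (rule R3_alg[OF sqrtD_pos[OF q] sqrtD_sq[OF q] refl]) (simp add: cos_squared_eq)
    then show ?thesis by simp
  qed
  ultimately have "((\<lambda>t. (1 - q^2) * (1 / ((1 - q^2 * (sin t)^2) * sqrt (1 - q^2 * (sin t)^2)))) has_integral Ef q) {0..pi/2}"
    by simp
  then have "integral {0..pi/2} (\<lambda>t. (1 - q^2) * (1 / ((1 - q^2 * (sin t)^2) * sqrt (1 - q^2 * (sin t)^2)))) = Ef q"
    by (rule integral_unique)
  then show ?thesis unfolding J3_def integral_mult_right[symmetric] .
qed

lemma K_deriv: assumes "q \<in> {-1<..<1}" shows "(ellKc has_real_derivative Kf' q) (at q)"
  by (rule has_field_derivative_transform_within_open[OF Kf_deriv[OF assms] open_greaterThanLessThan assms])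
     (simp add: ellKc_eq[OF U_sq])

lemma E_deriv: assumes "q \<in> {-1<..<1}" shows "(ellEc has_real_derivative Ef' q) (at q)"
  using Ef_deriv[OF assms] by (simp add: ellEc_eq[abs_def])

lemma K_ge: "q^2 < 1 \<Longrightarrow> pi/2 \<le> ellKc q"
  using ellF_ge[of q 0 "pi/2"] by (simp add: ellKc_def)

lemma K_pos: "q^2 < 1 \<Longrightarrow> 0 < ellKc q"
  using K_ge[of q] pi_gt_zero by linarith

lemma E_pos: assumes "q^2 < 1" shows "0 < ellEc q"
proof -
  have "ellE 0 q < ellE (pi/2) q"
    using DERIV_pos_imp_increasing[of 0 "pi/2" "\<lambda>x. ellE x q"] ellE_deriv[OF assms] sqrtD_pos[OF assms] by force
  then show ?thesis by (simp add: ellEc_def)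
qed

lemma E_le_pi2: assumes "q^2 < 1" shows "ellEc q \<le> pi/2"
proof -
  have "(\<lambda>x. ellE x q - x) (pi/2) \<le> (\<lambda>x. ellE x q - x) 0"
  proof (rule DERIV_nonpos_imp_nonincreasing[where f="\<lambda>x. ellE x q - x"])
    fix x assume "0 \<le> x" "x \<le> pi/2"
    show "\<exists>y. ((\<lambda>x. ellE x q - x) has_real_derivative y) (at x) \<and> y \<le> 0"
      using DERIV_diff[OF ellE_deriv[OF assms] DERIV_ident, of x] sqrtD_le1[of q x] by force
  qed simp
  then show ?thesis by (simp add: ellEc_def)
qed

lemma E_le_K: assumes "q^2 < 1" shows "ellEc q \<le> ellKc q"
proof -
  have "(\<lambda>x. ellF x q - ellE x q) 0 \<le> (\<lambda>x. ellF x q - ellE x q) (pi/2)"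
  proof (rule DERIV_nonneg_imp_nondecreasing[where f="\<lambda>x. ellF x q - ellE x q"])
    fix x assume "0 \<le> x" "x \<le> pi/2"
    have "sqrt (1 - q^2 * (sin x)^2) \<le> 1 / sqrt (1 - q^2 * (sin x)^2)"
      using sqrtD_pos[OF assms, of x] sqrtD_le1[of q x] by (simp add: field_simps mult_le_one)
    then show "\<exists>y. ((\<lambda>x. ellF x q - ellE x q) has_real_derivative y) (at x) \<and> 0 \<le> y"
      using DERIV_diff[OF ellF_deriv[OF assms] ellE_deriv[OF assms], of x] by force
  qed simp
  then show ?thesis by (simp add: ellEc_def ellKc_def)
qed

lemma Kf'_eq: assumes "0 < q" "q < 1"
  shows "Kf' q = (ellEc q / (1 - q^2) - ellKc q) / q"
proof -
  have q2: "q^2 < 1" using assms by (simp add: power_less_one_iff abs_square_less_1)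
  have "1 - q^2 \<noteq> 0" using q2 by simp
  then have "J3 q = ellEc q / (1 - q^2)" using R3[OF q2] by (simp add: field_simps ellEc_eq)
  then show ?thesis using R2[OF q2] assms by (simp add: field_simps ellKc_eq[OF q2])
qed

lemma Ef'_eq: assumes "0 < q" "q < 1"
  shows "Ef' q = (ellEc q - ellKc q) / q"
proof -
  have q2: "q^2 < 1" using assms by (simp add: power_less_one_iff abs_square_less_1)
  show ?thesis using R1[OF q2] assms by (simp add: field_simps ellKc_eq[OF q2] ellEc_eq)
qed


definition Gp :: "real \<Rightarrow> real" where "Gp q = 2 * ellEc q - ellKc q"
definition Gd :: "real \<Rightarrow> real" where "Gd q = 2 * Ef' q - Kf' q"
definition fd :: "real \<Rightarrow> real" where
  "fd q = (16*q^3 - 10*q) * ellKc q + (4*q^4 - 5*q^2 + 1) * Kf' q + (-32*q^3 + 16*q) * ellEc q + (-8*q^4 + 8*q^2 - 1) * Ef' q"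
definition gd :: "real \<Rightarrow> real" where
  "gd q = 16 * Gp q * Gd q * (2*q^2 - 1) + 32 * q * (Gp q)^2"

lemma G_deriv: assumes "q \<in> {-1<..<1}" shows "(Gp has_real_derivative Gd q) (at q)"
  unfolding Gp_def[abs_def] Gd_def
  by (intro DERIV_diff DERIV_cmult K_deriv E_deriv assms)

lemma K_deriv_w: "q \<in> {-1<..<1} \<Longrightarrow> (ellKc has_real_derivative Kf' q) (at q within s)"
  using K_deriv has_field_derivative_at_within by blast
lemma E_deriv_w: "q \<in> {-1<..<1} \<Longrightarrow> (ellEc has_real_derivative Ef' q) (at q within s)"
  using E_deriv has_field_derivative_at_within by blast

lemma f_deriv: assumes "q \<in> {-1<..<1}" shows "(fpar has_real_derivative fd q) (at q)"
  unfolding fpar_def[abs_def] fd_def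
  using assms by (auto intro!: derivative_eq_intros K_deriv_w E_deriv_w simp: algebra_simps)

lemma g_deriv: assumes "q \<in> {-1<..<1}" shows "(gpar has_real_derivative gd q) (at q)"
proof -
  have "gpar = (\<lambda>q. 8 * (Gp q)^2 * (2*q^2 - 1))" by (simp add: gpar_def[abs_def] Gp_def[abs_def])
  moreover have "((\<lambda>q. 8 * (Gp q)^2 * (2*q^2 - 1)) has_real_derivative gd q) (at q)"
    unfolding gd_def
    using assms G_deriv[OF assms] by (auto intro!: derivative_eq_intros simp: algebra_simps)
  ultimately show ?thesis by simp
qed


lemma q2_of: "0 < q \<Longrightarrow> q < 1 \<Longrightarrow> (q::real)^2 < 1"
  by (simp add: abs_square_less_1)

lemma Gd_eq: assumes "0 < q" "q < 1"
  shows "Gd q = ((1 - 2*q^2) * ellEc q - (1 - q^2) * ellKc q) / (q * (1 - q^2))"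
proof -
  have "1 - q^2 \<noteq> 0" using q2_of[OF assms] by simp
  then show ?thesis using assms unfolding Gd_def Kf'_eq[OF assms] Ef'_eq[OF assms]
    by (simp add: field_simps)
qed

lemma Gd_neg: assumes "0 < q" "q < 1" shows "Gd q < 0"
proof -
  have q2: "q^2 < 1" "0 < q^2" using q2_of[OF assms] assms by auto
  have K: "0 < ellKc q" and E: "0 < ellEc q" and EK: "ellEc q \<le> ellKc q"
    using K_pos E_pos E_le_K q2 by auto
  have "(1 - 2*q^2) * ellEc q - (1 - q^2) * ellKc q < 0"
  proof (cases "0 \<le> 1 - 2*q^2")
    case True
    then have "(1 - 2*q^2) * ellEc q \<le> (1 - 2*q^2) * ellKc q" using EK by (simp add: mult_left_mono)
    moreover have "(1 - 2*q^2) * ellKc q < (1 - q^2) * ellKc q" using K q2 by (simp add: mult_strict_right_mono)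
    ultimately show ?thesis by linarith
  next
    case False
    then have "(1 - 2*q^2) * ellEc q < 0" using E by (simp add: mult_neg_pos)
    moreover have "0 < (1 - q^2) * ellKc q" using K q2 by simp
    ultimately show ?thesis by linarith
  qed
  moreover have "0 < q * (1 - q^2)" using q2 assms by simp
  ultimately show ?thesis unfolding Gd_eq[OF assms] by (simp add: divide_neg_pos)
qed

lemma gd_eq: assumes "0 < q" "q < 1"
  shows "gd q = 16 * Gp q * fpar q / (q * (1 - q^2))"
proof -
  have "1 - q^2 \<noteq> 0" using q2_of[OF assms] by simp
  then show ?thesis using assms unfolding gd_def Gd_eq[OF assms] fpar_def Gp_def
    by (simp add: field_simps) (simp add: algebra_simps power2_eq_square power3_eq_cube power4_eq_xxxx)
qed

lemma fd_alg: fixes x E K Kp Ep :: real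
  assumes "x * (1 - x^2) * Kp = E - (1 - x^2) * K" "x * Ep = E - K" "x \<noteq> 0" "1 - x^2 \<noteq> 0"
  shows "(16*x^3 - 10*x) * K + (4*x^4 - 5*x^2 + 1) * Kp + (-32*x^3 + 16*x) * E + (-8*x^4 + 8*x^2 - 1) * Ep
     = 2 * x * ((10 * x^2 - 13/2) * K - 10 * (2 * x^2 - 1) * E)"
proof -
  have "x * (1 - x^2) * ((16*x^3 - 10*x) * K + (4*x^4 - 5*x^2 + 1) * Kp + (-32*x^3 + 16*x) * E + (-8*x^4 + 8*x^2 - 1) * Ep)
     = x * (1 - x^2) * (2 * x * ((10 * x^2 - 13/2) * K - 10 * (2 * x^2 - 1) * E))"
    using assms(1,2) by algebra
  then show ?thesis using assms(3,4) by simp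
qed

lemma fd_eq: assumes "0 < q" "q < 1"
  shows "fd q = 2 * q * ((10 * q^2 - 13/2) * ellKc q - 10 * (2 * q^2 - 1) * ellEc q)"
proof -
  have "1 - q^2 \<noteq> 0" using q2_of[OF assms] by simp
  moreover have "q * (1 - q^2) * Kf' q = ellEc q - (1 - q^2) * ellKc q"
    using assms \<open>1 - q^2 \<noteq> 0\<close> unfolding Kf'_eq[OF assms] by (simp add: field_simps)
  moreover have "q * Ef' q = ellEc q - ellKc q"
    using assms unfolding Ef'_eq[OF assms] by (simp add: field_simps)
  ultimately show ?thesis unfolding fd_def using assms by (intro fd_alg) auto
qed


lemma fz_alg: fixes p K E :: real
  assumes p: "1/2 \<le> p" "p < 1" and KE: "0 < K" "0 < E"
    and f0: "(4*p^2 - 5*p + 1) * K + (-8*p^2 + 8*p - 1) * E = 0"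
  shows "(10*p - 13/2) * K - 10 * (2*p - 1) * E < 0"
proof -
  have "4*p^2 - 5*p + 1 = (4*p - 1) * (p - 1)" by algebra
  moreover have "0 < 4*p - 1" "p - 1 < 0" using p by auto
  ultimately have A: "4*p^2 - 5*p + 1 < 0" by (simp add: mult_pos_neg)
  have DE: "(8*p^2 - 8*p + 1) * E = (4*p^2 - 5*p + 1) * K" using f0 by (simp add: algebra_simps)
  have "(4*p^2 - 5*p + 1) * K < 0" using A KE by (simp add: mult_neg_pos)
  then have "(8*p^2 - 8*p + 1) * E < 0" using DE by simp
  then have Dn: "8*p^2 - 8*p + 1 < 0" using KE by (simp add: mult_less_0_iff)
  have "(8*p^2 - 8*p + 1) * ((10*p - 13/2) * K - 10 * (2*p - 1) * E) = (8*p^2 - 8*p + 7/2) * K"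
  proof -
    have "(8*p^2 - 8*p + 1) * ((10*p - 13/2) * K - 10 * (2*p - 1) * E)
       = (10*p - 13/2) * (8*p^2 - 8*p + 1) * K - 10 * (2*p - 1) * ((8*p^2 - 8*p + 1) * E)"
      by (simp add: algebra_simps)
    also have "\<dots> = (10*p - 13/2) * (8*p^2 - 8*p + 1) * K - 10 * (2*p - 1) * ((4*p^2 - 5*p + 1) * K)"
      by (simp only: DE)
    also have "\<dots> = (8*p^2 - 8*p + 7/2) * K" by (simp add: algebra_simps power2_eq_square)
    finally show ?thesis .
  qed
  moreover have "0 < 8*p^2 - 8*p + 7/2"
  proof -
    have "8*p^2 - 8*p + 7/2 = 8*(p - 1/2)^2 + 3/2" by (simp add: algebra_simps power2_eq_square)
    moreover have "0 \<le> 8*(p - 1/2)^2" by simp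
    ultimately show ?thesis by linarith
  qed
  ultimately have "0 < (8*p^2 - 8*p + 1) * ((10*p - 13/2) * K - 10 * (2*p - 1) * E)" using KE by simp
  then show ?thesis using Dn by (simp add: zero_less_mult_iff)
qed

lemma sq_half: "1 / sqrt 2 \<le> q \<Longrightarrow> 1/2 \<le> (q::real)^2"
proof -
  assume a: "1 / sqrt 2 \<le> q"
  have "0 \<le> 1 / sqrt (2::real)" by simp
  then have "(1 / sqrt 2)^2 \<le> q^2" using a power_mono by blast
  then show ?thesis by (simp add: power_divide)
qed

lemma fd_zero_neg: assumes q: "1/sqrt 2 \<le> q" "q < 1" and f0: "fpar q = 0" shows "fd q < 0"
proof -
  have q0: "0 < q" using q(1) by (smt (verit) divide_pos_pos real_sqrt_gt_zero)
  have q2: "q^2 < 1" using q2_of[OF q0 q(2)] .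
  have "(10*q^2 - 13/2) * ellKc q - 10 * (2*q^2 - 1) * ellEc q < 0"
  proof (rule fz_alg[OF sq_half[OF q(1)]])
    show "q^2 < 1" "0 < ellKc q" "0 < ellEc q" using q2 K_pos E_pos by auto
    show "(4*(q^2)^2 - 5*q^2 + 1) * ellKc q + (-8*(q^2)^2 + 8*q^2 - 1) * ellEc q = 0"
      using f0 unfolding fpar_def by (simp add: power_mult[symmetric])
  qed
  then show ?thesis unfolding fd_eq[OF q0 q(2)] using q0 by (simp add: mult_pos_neg)
qed

lemma G_half_pos: "0 < Gp (1 / sqrt 2)"
proof -
  define q :: real where "q = 1 / sqrt 2"
  have qq: "q^2 = 1/2" unfolding q_def by (simp add: power_divide)
  have q2: "q^2 < 1" using qq by simp
  have hd: "((\<lambda>x. 2 * ellE x q - ellF x q) has_real_derivative (cos x)^2 / sqrt (1 - q^2 * (sin x)^2)) (at x)" for x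
  proof -
    have e: "1 - 2 * q^2 * (sin x)^2 = (cos x)^2" using qq by (simp add: cos_squared_eq)
    from h_deriv[OF q2, of x] show ?thesis unfolding e .
  qed
  have pi2: "1 < pi / 2" using pi_gt3 by simp
  have "(\<lambda>x. 2 * ellE x q - ellF x q) 0 < (\<lambda>x. 2 * ellE x q - ellF x q) 1"
  proof (rule DERIV_pos_imp_increasing[where f="\<lambda>x. 2 * ellE x q - ellF x q"])
    fix x :: real assume x: "0 \<le> x" "x \<le> 1"
    have "0 < cos x" using x pi2 by (intro cos_gt_zero_pi) auto
    then have "0 < (cos x)^2 / sqrt (1 - q^2 * (sin x)^2)" using sqrtD_pos[OF q2, of x] by simp
    then show "\<exists>y. ((\<lambda>x. 2 * ellE x q - ellF x q) has_real_derivative y) (at x) \<and> 0 < y"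
      using hd by blast
  qed simp
  moreover have "(\<lambda>x. 2 * ellE x q - ellF x q) 1 \<le> (\<lambda>x. 2 * ellE x q - ellF x q) (pi/2)"
  proof (rule DERIV_nonneg_imp_nondecreasing[where f="\<lambda>x. 2 * ellE x q - ellF x q"])
    fix x :: real assume x: "1 \<le> x" "x \<le> pi/2"
    have "0 \<le> (cos x)^2 / sqrt (1 - q^2 * (sin x)^2)" using sqrtD_pos[OF q2, of x] by simp
    then show "\<exists>y. ((\<lambda>x. 2 * ellE x q - ellF x q) has_real_derivative y) (at x) \<and> 0 \<le> y"
      using hd by blast
  qed (use pi2 in simp)
  ultimately have "0 < 2 * ellE (pi/2) q - ellF (pi/2) q" by simp
  then show ?thesis unfolding Gp_def ellEc_def ellKc_def q_def .
qed

lemma f_half_pos: "0 < fpar (1 / sqrt 2)"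
proof -
  have qq: "(1 / sqrt 2 :: real)^2 = 1/2" by (simp add: power_divide)
  have p4: "(x::real)^4 = x^2 * x^2" for x by algebra
  have q4: "(1 / sqrt 2 :: real)^4 = 1/4" unfolding p4 qq by simp
  show ?thesis using G_half_pos unfolding fpar_def Gp_def qq q4 by simp
qed

lemma f_1920_neg: "fpar (19/20) < 0"
proof -
  have q2: "(19/20::real)^2 < 1" by (simp add: power2_eq_square)
  have "(4*(19/20)^4 - 5*(19/20)^2 + 1) * ellKc (19/20) < (0::real)"
  proof -
    have "4*(19/20)^4 - 5*(19/20)^2 + 1 < (0::real)" by (simp add: eval_nat_numeral)
    then show ?thesis using K_pos[OF q2] by (simp add: mult_neg_pos)
  qed
  moreover have "(-8*(19/20)^4 + 8*(19/20)^2 - 1) * ellEc (19/20) < (0::real)"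
  proof -
    have "-8*(19/20)^4 + 8*(19/20)^2 - 1 < (0::real)" by (simp add: eval_nat_numeral)
    then show ?thesis using E_pos[OF q2] by (simp add: mult_neg_pos)
  qed
  ultimately show ?thesis unfolding fpar_def by simp
qed


lemma exp4: "exp (4::real) < 151"
proof -
  have "exp (4::real) = exp 1 * exp 1 * exp 1 * exp 1"
    by (simp add: exp_add[symmetric])
  also have "\<dots> \<le> 3 * 3 * 3 * 3"
    using exp_le by (intro mult_mono) auto
  finally show ?thesis by simp
qed

lemma K_big: "pi < ellKc (sqrt (9999/10000))"
proof -
  define q :: real where "q = sqrt (9999/10000)"
  define d :: real where "d = 1/100"
  have qq: "q^2 = 9999/10000" unfolding q_def by simp
  have q2: "q^2 < 1" using qq by simp
  have pi2: "0 < pi/2" by simp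
  have "(\<lambda>x. ellF x q + ln (pi/2 - x + d)) 0 \<le> (\<lambda>x. ellF x q + ln (pi/2 - x + d)) (pi/2)"
  proof (rule DERIV_nonneg_imp_nondecreasing[where f="\<lambda>x. ellF x q + ln (pi/2 - x + d)"])
    fix x :: real assume x: "0 \<le> x" "x \<le> pi/2"
    define u where "u = pi/2 - x"
    have u0: "0 \<le> u" using x u_def by simp
    have ud: "0 < u + d" using u0 d_def by simp
    have der: "((\<lambda>x. ellF x q + ln (pi/2 - x + d)) has_real_derivative
       1 / sqrt (1 - q^2 * (sin x)^2) + (- 1) / (pi/2 - x + d)) (at x)"
      using ud u_def by (auto intro!: derivative_eq_intros ellF_deriv[OF q2] simp: field_simps)
    have cu: "cos x \<le> u"
    proof -
      have "cos x = sin u" unfolding u_def by (simp add: sin_cos_eq)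
      also have "\<dots> \<le> u" using u0 by (rule sin_x_le_x)
      finally show ?thesis .
    qed
    have c0: "0 \<le> cos x" using x by (intro cos_ge_zero) auto
    have "(cos x)^2 \<le> u^2" using cu c0 by (simp add: power_mono)
    moreover have "1 - q^2 * (sin x)^2 = (cos x)^2 + (sin x)^2 / 10000"
      using qq by (simp add: cos_squared_eq algebra_simps)
    moreover have "(sin x)^2 / 10000 \<le> d^2" unfolding d_def by (simp add: abs_square_le_1 power_divide)
    moreover have "u^2 + d^2 \<le> (u + d)^2" using u0 d_def by (simp add: power2_eq_square algebra_simps)
    ultimately have "1 - q^2 * (sin x)^2 \<le> (u + d)^2" by linarith
    then have "sqrt (1 - q^2 * (sin x)^2) \<le> u + d"
      using ud real_sqrt_le_mono[of "1 - q^2 * (sin x)^2" "(u+d)^2"] by simp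
    then have "1 / (u + d) \<le> 1 / sqrt (1 - q^2 * (sin x)^2)"
      using sqrtD_pos[OF q2, of x] by (simp add: frac_le)
    then have "0 \<le> 1 / sqrt (1 - q^2 * (sin x)^2) + (- 1) / (pi/2 - x + d)" using u_def by simp
    then show "\<exists>y. ((\<lambda>x. ellF x q + ln (pi/2 - x + d)) has_real_derivative y) (at x) \<and> 0 \<le> y"
      using der by blast
  qed simp
  then have "ln (pi/2 + d) - ln d \<le> ellF (pi/2) q" by simp
  moreover have "ln (pi/2 + d) - ln d = ln (50 * pi + 1)"
  proof -
    have "ln (pi/2 + d) - ln d = ln ((pi/2 + d) / d)"
    proof (rule ln_divide_pos[symmetric])
      show "0 < pi/2 + d" "0 < d" using pi_gt_zero unfolding d_def by linarith+
    qed
    also have "(pi/2 + d) / d = 50 * pi + 1" unfolding d_def by simp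
    finally show ?thesis .
  qed
  moreover have "4 < ln (50 * pi + 1)"
  proof -
    have "exp 4 < 50 * pi + 1" using exp4 pi_gt3 by simp
    moreover have "0 < 50 * pi + 1" using pi_gt_zero by linarith
    ultimately have "ln (exp 4) < ln (50 * pi + 1)" by (subst ln_less_cancel_iff) auto
    then show ?thesis by simp
  qed
  ultimately have "4 < ellF (pi/2) q" by linarith
  then show ?thesis using pi_less_4 unfolding ellKc_def q_def by linarith
qed

lemma G_neg_some: "Gp (sqrt (9999/10000)) < 0"
proof -
  have q2: "(sqrt (9999/10000::real))^2 < 1" by simp
  show ?thesis using K_big E_le_pi2[OF q2] unfolding Gp_def by linarith
qed

lemma no_two_zeros:
  fixes f fd :: "real \<Rightarrow> real"
  assumes der: "\<And>x. lo \<le> x \<Longrightarrow> x < hi \<Longrightarrow> (f has_real_derivative fd x) (at x)"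
    and neg: "\<And>x. lo \<le> x \<Longrightarrow> x < hi \<Longrightarrow> f x = 0 \<Longrightarrow> fd x < 0"
    and ab: "lo \<le> a" "a < b" "b < hi" "f a = 0" "f b = 0"
  shows False
proof -
  have cont: "isCont f x" if "lo \<le> x" "x < hi" for x using der[OF that] by (rule DERIV_isCont)
  obtain d where d: "d > 0" "\<forall>h>0. h < d \<longrightarrow> f a > f (a + h)"
    using DERIV_neg_dec_right[OF der[of a] neg[of a]] ab by auto
  define x1 where "x1 = a + min (d/2) ((b - a)/2)"
  have h1: "0 < min (d/2) ((b - a)/2)" "min (d/2) ((b - a)/2) < d" "min (d/2) ((b - a)/2) \<le> (b - a)/2"
    using d ab by (auto simp: min_def)
  have x1: "a < x1" "x1 < b" "f x1 < 0" using d(2) h1 ab unfolding x1_def by auto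
  define Z where "Z = {x \<in> {x1..b}. f x = 0}"
  have cb: "continuous_on {x1..b} f"
    using cont x1 ab by (intro continuous_at_imp_continuous_on) auto
  have Zc: "closed Z" unfolding Z_def by (rule continuous_closed_preimage_constant[OF cb]) simp
  have bZ: "b \<in> Z" unfolding Z_def using x1 ab by auto
  have Zb: "bdd_below Z" unfolding Z_def by (rule bdd_belowI[where m=x1]) auto
  define c where "c = Inf Z"
  have cZ: "c \<in> Z" unfolding c_def using closed_contains_Inf[OF _ Zb Zc] bZ by auto
  then have c: "x1 \<le> c" "c \<le> b" "f c = 0" unfolding Z_def by auto
  then have cx1: "x1 < c" using x1 by (cases "x1 = c") auto
  obtain d' where d': "d' > 0" "\<forall>h>0. h < d' \<longrightarrow> f c < f (c - h)"
    using DERIV_neg_dec_left[OF der[of c] neg[of c]] c x1 ab by auto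
  define y where "y = c - min (d'/2) ((c - x1)/2)"
  have h2: "0 < min (d'/2) ((c - x1)/2)" "min (d'/2) ((c - x1)/2) < d'" "min (d'/2) ((c - x1)/2) \<le> (c - x1)/2"
    using d' cx1 by (auto simp: min_def)
  have y: "x1 < y" "y < c" "0 < f y" using d'(2) h2 c unfolding y_def by auto
  obtain z where z: "x1 \<le> z" "z \<le> y" "f z = 0"
    using IVT'[of f x1 0 y] x1 y continuous_on_subset[OF cb, of "{x1..y}"] c by auto
  then have "z \<in> Z" unfolding Z_def using y c by auto
  then have "c \<le> z" unfolding c_def using Zb by (rule cInf_lower)
  then show False using z y by simp
qed


lemma U_of: "0 \<le> q \<Longrightarrow> q < 1 \<Longrightarrow> (q::real) \<in> {-1<..<1}" by auto

lemma contG: "0 \<le> q \<Longrightarrow> q < 1 \<Longrightarrow> isCont Gp q"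
  using DERIV_isCont[OF G_deriv[OF U_of]] .
lemma contf: "0 \<le> q \<Longrightarrow> q < 1 \<Longrightarrow> isCont fpar q"
  using DERIV_isCont[OF f_deriv[OF U_of]] .
lemma contg: "0 \<le> q \<Longrightarrow> q < 1 \<Longrightarrow> isCont gpar q"
  using DERIV_isCont[OF g_deriv[OF U_of]] .

lemma G_strict: assumes "0 \<le> a" "a < b" "b < 1" shows "Gp b < Gp a"
proof (rule DERIV_neg_imp_decreasing_open[OF assms(2)])
  fix x assume "a < x" "x < b"
  then show "\<exists>y. (Gp has_real_derivative y) (at x) \<and> y < 0"
    using assms G_deriv[OF U_of] Gd_neg by (meson le_less_trans less_imp_le less_trans)
next
  show "continuous_on {a..b} Gp" using assms contG by (intro continuous_at_imp_continuous_on) auto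
qed

definition s2 :: real where "s2 = 1 / sqrt 2"
definition qs0 :: real where "qs0 = sqrt (9999/10000)"

lemma s2_facts: "0 < s2" "s2 < 19/20" "19/20 < qs0" "qs0 < 1" "s2^2 = 1/2"
proof -
  show "0 < s2" unfolding s2_def by simp
  show sq: "s2^2 = 1/2" unfolding s2_def by (simp add: power_divide)
  have "s2^2 < (19/20)^2" using sq by (simp add: power2_eq_square)
  then show "s2 < 19/20" by (rule power_less_imp_less_base) simp
  have "(19/20::real) = sqrt ((19/20)^2)" by simp
  also have "\<dots> < qs0" unfolding qs0_def by (subst real_sqrt_less_iff) (simp add: power2_eq_square)
  finally show "19/20 < qs0" .
  show "qs0 < 1" unfolding qs0_def by simp
qed

lemma qstar_props: "s2 < qstar" "qstar < 1" "Gp qstar = 0"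
proof -
  obtain z where z: "s2 \<le> z" "z \<le> qs0" "Gp z = 0"
    using IVT2[of Gp qs0 0 s2] G_neg_some G_half_pos s2_facts contG
    unfolding qs0_def[symmetric] s2_def[symmetric] by force
  have z1: "0 < z" "z < 1" using z s2_facts by auto
  have uniq: "w = z" if "0 < w" "w < 1" "Gp w = 0" for w
    using G_strict[of w z] G_strict[of z w] that z z1 by (cases w z rule: linorder_cases) auto
  have "qstar = z" unfolding qstar_def
  proof (rule the_equality)
    show "0 < z \<and> z < 1 \<and> 2 * ellEc z - ellKc z = 0" using z z1 by (simp add: Gp_def)
  next
    fix w assume "0 < w \<and> w < 1 \<and> 2 * ellEc w - ellKc w = 0"
    then show "w = z" using uniq by (simp add: Gp_def)
  qed
  moreover have "z \<noteq> s2" using z G_half_pos s2_def by auto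
  ultimately show "s2 < qstar" "qstar < 1" "Gp qstar = 0" using z z1 by auto
qed

lemma G_pos: assumes "0 \<le> q" "q < qstar" shows "0 < Gp q"
  using G_strict[OF assms(1,2)] qstar_props by simp


lemma f_zero_unique: assumes "s2 \<le> v" "v < 1" "fpar v = 0" "s2 \<le> w" "w < 1" "fpar w = 0" shows "v = w"
proof (rule ccontr)
  assume ne: "v \<noteq> w"
  have der: "\<And>x. s2 \<le> x \<Longrightarrow> x < 1 \<Longrightarrow> (fpar has_real_derivative fd x) (at x)"
    using s2_facts by (intro f_deriv U_of) auto
  have neg: "fd x < 0" if "s2 \<le> x" "x < 1" "fpar x = 0" for x
    using fd_zero_neg[of x] that unfolding s2_def by blast
  show False
  proof (cases "v < w")
    case True
    show ?thesis by (rule no_two_zeros[OF der neg, where a=v and b=w]) (use assms True in auto)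
  next
    case False
    then have "w < v" using ne by simp
    show ?thesis by (rule no_two_zeros[OF der neg, where a=w and b=v]) (use assms \<open>w < v\<close> in auto)
  qed
qed

lemma qhat_props: "s2 < qhat" "qhat < 19/20" "fpar qhat = 0"
proof -
  have c: "\<forall>x. s2 \<le> x \<and> x \<le> 19/20 \<longrightarrow> isCont fpar x" using s2_facts contf by auto
  obtain z where z: "s2 \<le> z" "z \<le> 19/20" "fpar z = 0"
    using IVT2[of fpar "19/20" 0 s2, OF _ _ _ c] f_1920_neg f_half_pos s2_facts
    unfolding s2_def[symmetric] by auto
  have "qhat = z" unfolding qhat_def
  proof (rule the_equality)
    show "1 / sqrt 2 \<le> z \<and> z < 1 \<and> fpar z = 0" using z s2_def by auto
  next
    fix w assume "1 / sqrt 2 \<le> w \<and> w < 1 \<and> fpar w = 0"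
    then show "w = z" using f_zero_unique[of w z] z s2_def by auto
  qed
  moreover have "z \<noteq> s2" using z f_half_pos s2_def by auto
  moreover have "z \<noteq> 19/20" using z(3) f_1920_neg by (metis less_irrefl)
  ultimately show "s2 < qhat" "qhat < 19/20" "fpar qhat = 0" using z by auto
qed

lemma f_pos: assumes "s2 \<le> q" "q < qhat" shows "0 < fpar q"
proof (rule ccontr)
  assume "\<not> 0 < fpar q"
  moreover have c: "\<forall>x. s2 \<le> x \<and> x \<le> q \<longrightarrow> isCont fpar x" using s2_facts qhat_props assms contf by auto
  ultimately obtain w where w: "s2 \<le> w" "w \<le> q" "fpar w = 0"
    using IVT2[of fpar q 0 s2, OF _ _ _ c] f_half_pos assms
    unfolding s2_def[symmetric] by auto
  then have "w = qhat" using f_zero_unique[of w qhat] qhat_props s2_facts assms by auto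
  then show False using w assms by simp
qed

lemma f_neg: assumes "qhat < q" "q < 1" shows "fpar q < 0"
proof (rule ccontr)
  assume a: "\<not> fpar q < 0"
  have "\<exists>w. qhat < w \<and> w < 1 \<and> fpar w = 0"
  proof (cases "q \<le> 19/20")
    case True
    have c: "\<forall>x. q \<le> x \<and> x \<le> 19/20 \<longrightarrow> isCont fpar x" using s2_facts qhat_props assms contf by auto
    obtain w where "q \<le> w" "w \<le> 19/20" "fpar w = 0"
      using IVT2[of fpar "19/20" 0 q, OF _ _ _ c] f_1920_neg a True by auto
    moreover have "w < 1" using \<open>w \<le> 19/20\<close> by simp
    ultimately show ?thesis using assms by (intro exI[of _ w]) auto
  next
    case False
    have c: "\<forall>x. 19/20 \<le> x \<and> x \<le> q \<longrightarrow> isCont fpar x" using assms contf by auto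
    obtain w where "19/20 \<le> w" "w \<le> q" "fpar w = 0"
      using IVT[of fpar "19/20" 0 q, OF _ _ _ c] f_1920_neg a False by auto
    moreover have "qhat < w" using \<open>19/20 \<le> w\<close> qhat_props(2) by simp
    ultimately show ?thesis using assms by (intro exI[of _ w]) auto
  qed
  then obtain w where "qhat < w" "w < 1" "fpar w = 0" by blast
  then show False using f_zero_unique[of w qhat] qhat_props s2_facts by auto
qed


lemma g_s2: "gpar s2 = 0" unfolding gpar_def using s2_facts(5) by simp
lemma g_qstar: "gpar qstar = 0" unfolding gpar_def using qstar_props(3) by (simp add: Gp_def)

lemma gd_pos: assumes "s2 \<le> x" "x < qhat" "x < qstar" shows "0 < gd x"
proof -
  have x: "0 < x" "x < 1" using assms s2_facts qhat_props by auto
  have "0 < Gp x" using G_pos[of x] assms x by simp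
  moreover have "0 < fpar x" using f_pos assms by simp
  moreover have "0 < x * (1 - x^2)" using x q2_of[OF x] by simp
  ultimately show ?thesis unfolding gd_eq[OF x] by simp
qed

lemma gd_neg: assumes "qhat < x" "x < qstar" shows "gd x < 0"
proof -
  have x: "0 < x" "x < 1" using assms s2_facts qhat_props qstar_props by auto
  have "0 < Gp x" using G_pos[of x] assms x by simp
  moreover have "fpar x < 0" using f_neg assms x by simp
  moreover have "0 < x * (1 - x^2)" using x q2_of[OF x] by simp
  ultimately show ?thesis unfolding gd_eq[OF x] by (simp add: mult_pos_neg divide_neg_pos)
qed

lemma g_inc: assumes "s2 \<le> a" "a < b" "b \<le> qhat" "b \<le> qstar" shows "gpar a < gpar b"
proof (rule DERIV_pos_imp_increasing_open[OF assms(2)])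
  fix x assume x: "a < x" "x < b"
  have "0 \<le> x" "x < 1" using x assms s2_facts qstar_props by auto
  then show "\<exists>y. (gpar has_real_derivative y) (at x) \<and> 0 < y"
    using g_deriv[OF U_of] gd_pos[of x] x assms by auto
next
  show "continuous_on {a..b} gpar" using assms contg s2_facts qstar_props
    by (intro continuous_at_imp_continuous_on) auto
qed

lemma qhat_lt_qstar: "qhat < qstar"
proof (rule ccontr)
  assume "\<not> qhat < qstar"
  then have "gpar s2 < gpar qstar" using qstar_props by (intro g_inc) auto
  then show False using g_s2 g_qstar by simp
qed

lemma g_dec: assumes "qhat \<le> a" "a < b" "b \<le> qstar" shows "gpar b < gpar a"
proof (rule DERIV_neg_imp_decreasing_open[OF assms(2)])
  fix x assume x: "a < x" "x < b"
  have "0 \<le> x" "x < 1" using x assms s2_facts qstar_props qhat_props by auto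
  then show "\<exists>y. (gpar has_real_derivative y) (at x) \<and> y < 0"
    using g_deriv[OF U_of] gd_neg[of x] x assms by auto
next
  show "continuous_on {a..b} gpar" using assms contg s2_facts qstar_props qhat_props
    by (intro continuous_at_imp_continuous_on) auto
qed

lemma q1_props: assumes "0 < c" "c \<le> lamhat" shows "s2 < q1 c" "q1 c \<le> qhat"
proof -
  have cc: "\<forall>x. s2 \<le> x \<and> x \<le> qhat \<longrightarrow> isCont gpar x"
    using s2_facts qhat_props contg by auto
  obtain z where z: "s2 \<le> z" "z \<le> qhat" "gpar z = c"
    using IVT[of gpar s2 c qhat, OF _ _ _ cc] g_s2 assms qhat_props unfolding lamhat_def by auto
  have zs: "z \<noteq> s2" using z g_s2 assms by auto
  have "q1 c = z" unfolding q1_def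
  proof (rule the_equality)
    show "1 / sqrt 2 < z \<and> z \<le> qhat \<and> gpar z = c" using z zs s2_def by auto
  next
    fix w assume w: "1 / sqrt 2 < w \<and> w \<le> qhat \<and> gpar w = c"
    show "w = z"
    proof (cases w z rule: linorder_cases)
      case less then show ?thesis using g_inc[of w z] w z qhat_lt_qstar s2_def by auto
    next
      case greater then show ?thesis using g_inc[of z w] w z qhat_lt_qstar s2_def by auto
    qed simp
  qed
  then show "s2 < q1 c" "q1 c \<le> qhat" using z zs by auto
qed

lemma q2_props: assumes "0 < c" "c \<le> lamhat" shows "qhat \<le> q2 c" "q2 c < qstar"
proof -
  have cc: "\<forall>x. qhat \<le> x \<and> x \<le> qstar \<longrightarrow> isCont gpar x"
    using s2_facts qhat_props qstar_props contg by auto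
  obtain z where z: "qhat \<le> z" "z \<le> qstar" "gpar z = c"
    using IVT2[of gpar qstar c qhat, OF _ _ _ cc] g_qstar assms qhat_lt_qstar unfolding lamhat_def by auto
  have zs: "z \<noteq> qstar" using z g_qstar assms by auto
  have "q2 c = z" unfolding q2_def
  proof (rule the_equality)
    show "qhat \<le> z \<and> z < qstar \<and> gpar z = c" using z zs by auto
  next
    fix w assume w: "qhat \<le> w \<and> w < qstar \<and> gpar w = c"
    show "w = z"
    proof (cases w z rule: linorder_cases)
      case less then show ?thesis using g_dec[of w z] w z by auto
    next
      case greater then show ?thesis using g_dec[of z w] w z by auto
    qed simp
  qed
  then show "qhat \<le> q2 c" "q2 c < qstar" using z zs by auto
qed


lemma arc_ok: assumes "s2 < q" "q < qstar" "0 < l"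
  shows "inj_on (const_speed_reparam (arc_curve l q) 0 (arc_len l q)) {0..1}"
proof (rule arc_inj)
  show q0: "0 < q" using assms s2_facts by linarith
  show "q^2 < 1" using q2_of[OF q0] assms qstar_props by simp
  show "0 < 2 * ellEc q - ellKc q" using G_pos[of q] assms q0 unfolding Gp_def by simp
qed (use assms in simp)

theorem lemma5p2:
  fixes lam l :: real
  assumes "lam > 0" and "l > 0"
  shows "\<forall>\<gamma> \<in> omega lam l. inj_on \<gamma> {0..1}"
proof
  fix \<gamma> assume g: "\<gamma> \<in> omega lam l"
  define c where "c = lam * l^2"
  have c0: "0 < c" unfolding c_def using assms by simp
  have seg: "inj_on (gamma_seg l) {0..1}" using assms by (auto simp: inj_on_def gamma_seg_def)
  show "inj_on \<gamma> {0..1}"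
  proof (cases "c \<le> lamhat")
    case False
    then show ?thesis using g seg by (simp add: omega_def c_def)
  next
    case True
    have larc: "inj_on (gamma_larc_bar lam l) {0..1}"
      unfolding gamma_larc_bar_def Let_def c_def[symmetric]
      using q2_props[OF c0 True] qhat_props qhat_lt_qstar assms by (intro arc_ok) auto
    have sarc: "inj_on (gamma_sarc_bar lam l) {0..1}"
      unfolding gamma_sarc_bar_def Let_def c_def[symmetric]
      using q1_props[OF c0 True] qhat_lt_qstar assms by (intro arc_ok) auto
    show ?thesis using g True seg larc sarc by (auto simp: omega_def c_def)
  qed
qed


end
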